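(* Let $\mathscr{C}=\{C_k\}_{k\in I}$ be a polycylinder packing of $\mathbb{R}^{n+2}$, fix distinct $i,j\in I$, and let $x$ be a point of the core $a_i$ of $C_i$. Let $y$ and $z$ be points on the circle $S_x(2/\sqrt{3})$. If each of $y$ and $z$ is equidistant from $C_i$ and $C_j$, then the angle $\angle yxz$ is at most $2\arccos(\sqrt{3}-1)\approx 85.8828^\circ$.
   Context: A polycylinder is a subset of $\mathbb{R}^{n+2}$ isometric to $\mathbb{D}^2\times\mathbb{R}^n$, where $\mathbb{D}^2$ is the closed unit disk. A polycylinder packing of $\mathbb{R}^{n+2}$ is a countable family of polycylinders with mutually disjoint interiors. The core $a_k$ of a polycylinder $C_k$ is the $n$-dimensional affine subspace such that $C_k$ is the set of points at distance at most $1$ from $a_k$. For $x\in a_i$, $p_x$ is the $2$-dimensional affine plane through $x$ orthogonal to $a_i$, and $S_x(r)$ denotes the circle of radius $r$ in $p_x$ centered at $x$. *)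

theory Defs
  imports "HOL-Analysis.Analysis"
begin

text \<open>Ambient space: a Euclidean space of dimension n+2, i.e. DIM('a) \<ge> 2.
A polycylinder is given by its core a, an n-dimensional affine subspace
(aff_dim a = DIM('a) - 2); the polycylinder is the set of points at distance
at most 1 from the core (isometric to D^2 x R^n).\<close>

definition is_core :: "'a::euclidean_space set \<Rightarrow> bool" where
  "is_core a \<longleftrightarrow> affine a \<and> a \<noteq> {} \<and> aff_dim a = int DIM('a) - 2"

definition polycyl :: "'a::euclidean_space set \<Rightarrow> 'a set" where
  "polycyl a = {p. infdist p a \<le> 1}"

definition polycyl_packing :: "'i set \<Rightarrow> ('i \<Rightarrow> 'a::euclidean_space set) \<Rightarrow> bool" where
  "polycyl_packing I A \<longleftrightarrow> countable I \<and> (\<forall>k\<in>I. is_core (A k)) \<and>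
     (\<forall>k\<in>I. \<forall>l\<in>I. k \<noteq> l \<longrightarrow>
        interior (polycyl (A k)) \<inter> interior (polycyl (A l)) = {})"

definition orth_plane :: "'a::euclidean_space set \<Rightarrow> 'a \<Rightarrow> 'a set" where
  "orth_plane a x = {p. \<forall>u\<in>a. inner (p - x) (u - x) = 0}"

definition circ :: "'a::euclidean_space set \<Rightarrow> 'a \<Rightarrow> real \<Rightarrow> 'a set" where
  "circ a x r = {p \<in> orth_plane a x. dist p x = r}"

definition vec_angle :: "'a::euclidean_space \<Rightarrow> 'a \<Rightarrow> real" where
  "vec_angle u v = arccos (inner u v / (norm u * norm v))"

end

theory Submission
  imports Defs
begin

lemma closed_polycyl: "closed (polycyl (A::'a::euclidean_space set))"
proof -
  have "closed {p. infdist p A \<le> 1}"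
    by (intro closed_Collect_le continuous_intros)
  thus ?thesis by (simp add: polycyl_def)
qed

lemma near_core:
  fixes A :: "'a::euclidean_space set"
  assumes "affine A" "A \<noteq> {}" "infdist y (polycyl A) \<le> d"
  shows "\<exists>y'\<in>A. dist y y' \<le> d + 1"
proof -
  have cA: "closed A" using assms(1) by (rule affine_closed)
  have "A \<subseteq> polycyl A" by (auto simp: polycyl_def)
  hence ne: "polycyl A \<noteq> {}" using assms(2) by blast
  obtain q where q: "q \<in> polycyl A" "infdist y (polycyl A) = dist y q"
    using infdist_attains_inf[OF closed_polycyl ne] by blast
  obtain y' where y': "y' \<in> A" "infdist q A = dist q y'"
    using infdist_attains_inf[OF cA assms(2)] by blast
  have "dist q y' \<le> 1" using q(1) y'(2) by (simp add: polycyl_def)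
  hence "dist y y' \<le> d + 1" using q assms(3) dist_triangle[of y y' q] by linarith
  thus ?thesis using y' by blast
qed

lemma interior_polycyl: "{p. infdist p A < 1} \<subseteq> interior (polycyl (A::'a::euclidean_space set))"
proof -
  have "open {p. infdist p A < 1}"
    by (intro open_Collect_less continuous_intros)
  moreover have "{p. infdist p A < 1} \<subseteq> polycyl A" by (auto simp: polycyl_def)
  ultimately show ?thesis by (simp add: interior_maximal)
qed

lemma separation:
  fixes A B :: "'a::euclidean_space set"
  assumes "affine A" "A \<noteq> {}" "m \<in> B"
    and "interior (polycyl A) \<inter> interior (polycyl B) = {}"
  shows "infdist m A \<ge> 2"
proof (rule ccontr)
  assume "\<not> infdist m A \<ge> 2"
  hence lt: "infdist m A < 2" by simp
  obtain u where u: "u \<in> A" "infdist m A = dist m u"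
    using infdist_attains_inf[OF affine_closed[OF assms(1)] assms(2)] by blast
  define w where "w = midpoint m u"
  have "dist w u < 1" using lt u by (simp add: w_def dist_midpoint)
  hence "infdist w A < 1" using infdist_le[OF u(1), of w] by linarith
  moreover have "dist w m < 1" using lt u by (simp add: w_def dist_midpoint)
  hence "infdist w B < 1" using infdist_le[OF assms(3), of w] by linarith
  ultimately show False using interior_polycyl[of A] interior_polycyl[of B] assms(4) by blast
qed

lemma angle_bound:
  fixes Y Z :: "'a::euclidean_space"
  assumes "norm Y = 2 / sqrt 3" "norm Z = 2 / sqrt 3" "norm (Y + Z) \<ge> 2 * (2 - 2 / sqrt 3)"
  shows "vec_angle Y Z \<le> 2 * arccos (sqrt 3 - 1)"
proof -
  define r where "r = 2 / sqrt 3"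
  define c where "c = sqrt 3 - 1"
  have s3: "sqrt 3 * sqrt 3 = 3" by simp
  have s3b: "1.7 < sqrt 3" by (rule real_less_rsqrt) (simp add: power2_eq_square)
  have s3c: "sqrt 3 < 1.8" by (rule real_less_lsqrt) (simp_all add: power2_eq_square)
  have rpos: "r > 0" using s3b by (simp add: r_def)
  have cr: "c * r = 2 - r" unfolding c_def r_def using s3b by (simp add: field_simps)
  have c0: "0 \<le> c" "c \<le> 1" using s3b s3c by (simp_all add: c_def)
  have nY: "norm Y = r" "norm Z = r" using assms by (simp_all add: r_def)
  have "(2 * (c * r))^2 \<le> (norm (Y + Z))^2"
    using assms(3) cr c0 rpos mult_nonneg_nonneg[OF c0(1) less_imp_le[OF rpos]] unfolding r_def[symmetric]
    by (intro power_mono) auto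
  also have "(norm (Y + Z))^2 = 2 * r^2 + 2 * inner Y Z"
  proof -
    have "Y \<bullet> Y = r^2" "Z \<bullet> Z = r^2" using nY by (metis power2_norm_eq_inner)+
    thus ?thesis by (simp add: power2_norm_eq_inner inner_add_left inner_add_right inner_commute)
  qed
  finally have ip: "inner Y Z \<ge> (2 * c^2 - 1) * (r * r)" by (simp add: power2_eq_square algebra_simps)
  have q1: "inner Y Z / (norm Y * norm Z) \<ge> 2 * c^2 - 1"
    using ip rpos nY by (simp add: field_simps)
  have q2: "inner Y Z / (norm Y * norm Z) \<le> 1"
    using norm_cauchy_schwarz[of Y Z] rpos nY by (simp add: field_simps)
  have c1: "-1 \<le> 2 * c^2 - 1" by simp
  have ac: "0 \<le> arccos c" "arccos c \<le> pi / 2"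
    using c0 arccos_lbound[of c] arccos_le_pi2[of c] by auto
  have "cos (2 * arccos c) = 2 * c^2 - 1"
    using c0 by (simp add: cos_double_cos cos_arccos)
  hence "arccos (2 * c^2 - 1) = arccos (cos (2 * arccos c))" by simp
  also have "\<dots> = 2 * arccos c" using ac by (intro arccos_cos) auto
  finally have eq: "arccos (2 * c^2 - 1) = 2 * arccos c" .
  have "vec_angle Y Z \<le> arccos (2 * c^2 - 1)"
    unfolding vec_angle_def by (rule arccos_le_arccos[OF c1 q1 q2])
  thus ?thesis using eq by (simp add: c_def)
qed

theorem mainTheorem6:
  fixes I :: "'i set" and A :: "'i \<Rightarrow> 'a::euclidean_space set"
    and i j :: 'i and x y z :: 'a
  assumes "DIM('a) \<ge> 2"
    and "polycyl_packing I A"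
    and "i \<in> I" "j \<in> I" "i \<noteq> j"
    and "x \<in> A i"
    and "y \<in> circ (A i) x (2 / sqrt 3)" "z \<in> circ (A i) x (2 / sqrt 3)"
    and "infdist y (polycyl (A i)) = infdist y (polycyl (A j))"
    and "infdist z (polycyl (A i)) = infdist z (polycyl (A j))"
  shows "vec_angle (y - x) (z - x) \<le> 2 * arccos (sqrt 3 - 1)"
proof -
  define r where "r = 2 / sqrt 3"
  have s3b: "1.7 < sqrt 3" by (rule real_less_rsqrt) (simp add: power2_eq_square)
  have s3c: "sqrt 3 < 1.8" by (rule real_less_lsqrt) (simp_all add: power2_eq_square)
  have r1: "r > 1" unfolding r_def using s3b s3c by (simp add: field_simps)
  have dy: "dist y x = r" and dz: "dist z x = r" using assms(7,8) by (simp_all add: circ_def r_def)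
  have cores: "is_core (A i)" "is_core (A j)" using assms(2-4) by (auto simp: polycyl_packing_def)
  hence aff: "affine (A i)" "A i \<noteq> {}" "affine (A j)" "A j \<noteq> {}" by (auto simp: is_core_def)
  have disj: "interior (polycyl (A i)) \<inter> interior (polycyl (A j)) = {}"
    using assms(2-5) by (auto simp: polycyl_packing_def)
  have near: "infdist p (polycyl (A i)) \<le> r - 1" if "dist p x = r" for p
  proof -
    define q where "q = x + (1 / r) *\<^sub>R (p - x)"
    have "dist q x = 1" using that r1 by (simp add: q_def dist_norm)
    hence "infdist q (A i) \<le> 1" using infdist_le[OF assms(6), of q] by simp
    hence qin: "q \<in> polycyl (A i)" by (simp add: polycyl_def)
    have "p - q = (1 - 1 / r) *\<^sub>R (p - x)" by (simp add: q_def algebra_simps)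
    hence "dist p q = (1 - 1/r) * r" using that r1 by (simp add: dist_norm)
    also have "\<dots> = r - 1" using r1 by (simp add: field_simps)
    finally show ?thesis using infdist_le[OF qin, of p] by simp
  qed
  obtain y' where y': "y' \<in> A j" "dist y y' \<le> r"
    using near_core[OF aff(3,4), of y "r - 1"] near[OF dy] assms(9) by auto
  obtain z' where z': "z' \<in> A j" "dist z z' \<le> r"
    using near_core[OF aff(3,4), of z "r - 1"] near[OF dz] assms(10) by auto
  define m where "m = midpoint y' z'"
  have "(1 - 1/2) *\<^sub>R y' + (1/2) *\<^sub>R z' \<in> A j"
    using aff(3) y'(1) z'(1) unfolding affine_alt by blast
  moreover have "(1 - 1/2) *\<^sub>R y' + (1/2) *\<^sub>R z' = m"
    by (simp add: m_def midpoint_def scaleR_add_right)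
  ultimately have mA: "m \<in> A j" by simp
  have h1: "2 \<le> infdist m (A i)" by (rule separation[OF aff(1,2) mA disj])
  have h2: "infdist m (A i) \<le> infdist (midpoint y z) (A i) + dist m (midpoint y z)"
    by (rule infdist_triangle)
  have h3: "infdist (midpoint y z) (A i) \<le> dist (midpoint y z) x"
    by (rule infdist_le[OF assms(6)])
  have h4: "dist (midpoint y z) x = norm ((y - x) + (z - x)) / 2"
  proof -
    have "(y - x) + (z - x) = 2 *\<^sub>R (midpoint y z - x)"
      by (simp add: midpoint_def scaleR_diff_right scaleR_add_right scaleR_2)
    thus ?thesis by (simp add: dist_norm)
  qed
  have h5: "dist m (midpoint y z) = norm ((y' - y) + (z' - z)) / 2"
  proof -
    have "(y' - y) + (z' - z) = 2 *\<^sub>R (m - midpoint y z)"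
      by (simp add: m_def midpoint_def scaleR_diff_right scaleR_add_right scaleR_2)
    thus ?thesis by (simp add: dist_norm)
  qed
  have h6: "norm ((y' - y) + (z' - z)) \<le> dist y y' + dist z z'"
    by (metis dist_commute dist_norm norm_triangle_ineq)
  have "2 * (2 - r) \<le> norm ((y - x) + (z - x))" 
  proof -
    define N where "N = norm ((y - x) + (z - x))"
    define E where "E = norm ((y' - y) + (z' - z))"
    have "2 \<le> N / 2 + E / 2" using h1 h2 h3 h4 h5 unfolding N_def E_def by linarith
    moreover have "E \<le> 2 * r" using h6 y'(2) z'(2) unfolding E_def by linarith
    ultimately have "4 - 2 * r \<le> N" by linarith
    thus ?thesis unfolding N_def[symmetric] by (simp add: algebra_simps)
  qed
  moreover have "norm (y - x) = r" "norm (z - x) = r" using dy dz by (simp_all add: dist_norm)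
  ultimately show ?thesis by (intro angle_bound) (simp_all add: r_def)
qed

end
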